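(* Let $n\ge 1$ be an integer and let $a_i(x)$, $0\le i\le n-1$, be real continuous functions on an open interval $I=(a,b)$. Then there exists a solution $y$ on $I$ of the linear ordinary differential equation $$y^{(n)}+a_{n-1}(x)\,y^{(n-1)}+\cdots+a_0(x)\,y=0$$ such that $y, y', \ldots, y^{(n-1)}$ are linearly independent over $I$.
   Context: Linear independence over $I$ means that no nontrivial real linear combination of the functions vanishes identically on $I$. *)

theory Defs
  imports "HOL-Analysis.Analysis"
begin

definition higher_deriv :: "nat \<Rightarrow> (real \<Rightarrow> real) \<Rightarrow> real \<Rightarrow> real" where
  "higher_deriv k f = (deriv ^^ k) f"

definition n_times_differentiable_on :: "nat \<Rightarrow> (real \<Rightarrow> real) \<Rightarrow> real set \<Rightarrow> bool" where
  "n_times_differentiable_on n y I \<longleftrightarrow>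
     (\<forall>k<n. \<forall>x\<in>I. (higher_deriv k y has_real_derivative higher_deriv (Suc k) y x) (at x))"

definition is_linear_ode_solution ::
  "nat \<Rightarrow> (nat \<Rightarrow> real \<Rightarrow> real) \<Rightarrow> real set \<Rightarrow> (real \<Rightarrow> real) \<Rightarrow> bool" where
  "is_linear_ode_solution n a I y \<longleftrightarrow>
     n_times_differentiable_on n y I \<and>
     (\<forall>x\<in>I. higher_deriv n y x + (\<Sum>i<n. a i x * higher_deriv i y x) = 0)"

definition lin_indep_on :: "nat \<Rightarrow> (nat \<Rightarrow> real \<Rightarrow> real) \<Rightarrow> real set \<Rightarrow> bool" where
  "lin_indep_on m f I \<longleftrightarrow>
     (\<forall>c::nat \<Rightarrow> real. (\<forall>x\<in>I. (\<Sum>i<m. c i * f i x) = 0) \<longrightarrow> (\<forall>i<m. c i = 0))"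

end

theory Submission
  imports Defs "HOL-Computational_Algebra.Polynomial_Factorial" "HOL-Computational_Algebra.Field_as_Ring"
begin


definition appE :: "real poly \<Rightarrow> (nat \<Rightarrow> real) \<Rightarrow> nat \<Rightarrow> real" where
  "appE p s k = (\<Sum>i\<le>degree p. coeff p i * s (k+i))"

lemma appE_bound:
  assumes "degree p < N"
  shows "appE p s k = (\<Sum>i<N. coeff p i * s (k+i))"
  unfolding appE_def
proof (rule sum.mono_neutral_left)
  show "{..degree p} \<subseteq> {..<N}" using assms by auto
  show "\<forall>i\<in>{..<N} - {..degree p}. coeff p i * s (k + i) = 0"
    by (auto simp: coeff_eq_0)
qed auto

lemma appE_pCons: "appE (pCons a p) s k = a * s k + appE p s (Suc k)"
proof -
  define N where "N = Suc (degree p)"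
  have d1: "degree (pCons a p) < Suc N" unfolding N_def
    using degree_pCons_le[of a p] by linarith
  have "appE (pCons a p) s k = (\<Sum>i<Suc N. coeff (pCons a p) i * s (k+i))"
    by (rule appE_bound[OF d1])
  also have "\<dots> = a * s k + (\<Sum>i<N. coeff p i * s (Suc k + i))"
    by (subst sum.lessThan_Suc_shift) simp
  also have "(\<Sum>i<N. coeff p i * s (Suc k + i)) = appE p s (Suc k)"
    by (rule appE_bound[symmetric]) (simp add: N_def)
  finally show ?thesis .
qed

lemma appE_0 [simp]: "appE 0 s k = 0"
  by (simp add: appE_def)

lemma appE_add: "appE (p + q) s k = appE p s k + appE q s k"
proof -
  define N where "N = Suc (max (degree p) (degree q))"
  have "degree (p+q) < N" unfolding N_def using degree_add_le_max[of p q] by linarith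
  then have "appE (p+q) s k = (\<Sum>i<N. coeff (p+q) i * s (k+i))" by (rule appE_bound)
  also have "\<dots> = (\<Sum>i<N. coeff p i * s (k+i)) + (\<Sum>i<N. coeff q i * s (k+i))"
    by (simp add: sum.distrib distrib_right)
  also have "\<dots> = appE p s k + appE q s k"
    by (subst (1 2) appE_bound[symmetric]) (auto simp: N_def)
  finally show ?thesis .
qed

lemma appE_smult: "appE (smult c p) s k = c * appE p s k"
proof -
  have "appE (smult c p) s k = (\<Sum>i<Suc (degree p). coeff (smult c p) i * s (k+i))"
    by (rule appE_bound) (use degree_smult_le[of c p] in linarith)
  also have "\<dots> = c * (\<Sum>i<Suc (degree p). coeff p i * s (k+i))"
    by (simp only: coeff_smult sum_distrib_left mult.assoc)
  also have "\<dots> = c * appE p s k" by (subst appE_bound) auto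
  finally show ?thesis .
qed

lemma appE_sum_seq: "appE p (\<lambda>k. \<Sum>j<n. v j * s j k) k = (\<Sum>j<n. v j * appE p (s j) k)"
  unfolding appE_def by (simp add: sum_distrib_left sum.swap[of _ "{..<n}"] algebra_simps)

lemma appE_mult: "appE (p * q) s k = appE p (appE q s) k"
proof (induction p arbitrary: k)
  case 0
  then show ?case by simp
next
  case (pCons a p)
  have "appE (pCons a p * q) s k = appE (smult a q + pCons 0 (p * q)) s k"
    by simp
  also have "\<dots> = a * appE q s k + appE (p*q) s (Suc k)"
    by (simp add: appE_add appE_smult appE_pCons)
  also have "\<dots> = appE (pCons a p) (appE q s) k"
    by (simp add: appE_pCons pCons.IH)
  finally show ?case .
qed

definition recP :: "real poly \<Rightarrow> (nat \<Rightarrow> real) \<Rightarrow> bool" where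
  "recP p s \<longleftrightarrow> (\<forall>k. appE p s k = 0)"

lemma recP_mult: "recP q s \<Longrightarrow> recP (r * q) s"
proof -
  assume "recP q s"
  then have "appE q s = (\<lambda>k. 0)" by (auto simp: recP_def)
  then have "appE (r*q) s k = appE r (\<lambda>k. 0) k" for k by (simp add: appE_mult)
  then show ?thesis unfolding recP_def by (simp add: appE_def)
qed

lemma recP_gcd:
  assumes "recP p s" "recP q s"
  shows "recP (gcd p q) s"
proof -
  have "gcd p q = fst (bezout_coefficients p q) * p + snd (bezout_coefficients p q) * q"
    by (simp add: bezout_coefficients_fst_snd)
  then show ?thesis using assms recP_mult unfolding recP_def
    by (simp add: appE_add)
qed

lemma finite_submsets: "finite {M. M \<subseteq># (N::'a multiset)}"
proof (induction N)
  case empty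
  then show ?case by simp
next
  case (add a N)
  have "{M. M \<subseteq># add_mset a N} \<subseteq> {M. M \<subseteq># N} \<union> add_mset a ` {M. M \<subseteq># N}"
  proof
    fix M assume "M \<in> {M. M \<subseteq># add_mset a N}"
    then have M: "M \<subseteq># add_mset a N" by simp
    show "M \<in> {M. M \<subseteq># N} \<union> add_mset a ` {M. M \<subseteq># N}"
    proof (cases "a \<in># M")
      case True
      then have "M = add_mset a (M - {#a#})" by simp
      moreover have "M - {#a#} \<subseteq># N" using M True
        by (metis insert_DiffM subset_mset.add_le_cancel_left add_mset_add_single add.commute mset_subset_eq_add_mset_cancel)
      ultimately show ?thesis by blast
    next
      case False
      then have "M - {#a#} \<subseteq># N" using M
        by (metis subset_eq_diff_conv add_mset_add_single)
      then have "M \<subseteq># N" using False by (simp add: diff_single_trivial)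
      then show ?thesis by simp
    qed
  qed
  then show ?case using add.IH by (meson finite_UnI finite_imageI finite_subset)
qed

lemma finite_norm_divisors:
  fixes x :: "real poly"
  assumes "x \<noteq> 0"
  shows "finite {y. y dvd x \<and> normalize y = y}"
proof (rule finite_subset)
  show "{y. y dvd x \<and> normalize y = y} \<subseteq> prod_mset ` {M. M \<subseteq># prime_factorization x}"
  proof
    fix y assume y: "y \<in> {y. y dvd x \<and> normalize y = y}"
    then have y0: "y \<noteq> 0" using assms by auto
    have "y = prod_mset (prime_factorization y)"
      using y y0 by (simp add: prod_mset_prime_factorization)
    moreover have "prime_factorization y \<subseteq># prime_factorization x"
      using y y0 assms prime_factorization_subset_iff_dvd by blast
    ultimately show "y \<in> prod_mset ` {M. M \<subseteq># prime_factorization x}" by blast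
  qed
  show "finite (prod_mset ` {M. M \<subseteq># prime_factorization x})"
    by (intro finite_imageI finite_submsets)
qed

lemma subsingleton_finite: "(\<And>s t. s \<in> A \<Longrightarrow> t \<in> A \<Longrightarrow> s = t) \<Longrightarrow> finite A"
proof (cases "A = {}")
  case False
  assume h: "\<And>s t. s \<in> A \<Longrightarrow> t \<in> A \<Longrightarrow> s = t"
  from False obtain a where "a \<in> A" by blast
  then have "A \<subseteq> {a}" using h by blast
  then show ?thesis using finite_subset by blast
qed simp

lemma no_finite_union:
  fixes SS :: "(nat \<Rightarrow> real) set set"
  assumes "finite SS"
    and "\<forall>S\<in>SS. \<forall>u\<in>S. \<forall>w\<in>S. \<forall>\<alpha> \<beta>. (\<lambda>i. \<alpha> * u i + \<beta> * w i) \<in> S"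
    and "\<forall>S\<in>SS. \<exists>u. u \<notin> S"
  shows "\<exists>v. \<forall>S\<in>SS. v \<notin> S"
  using assms
proof (induction SS rule: finite_induct)
  case empty
  then show ?case by simp
next
  case (insert S SS)
  have cl: "(\<lambda>i. \<alpha> * u i + \<beta> * w i) \<in> T"
    if "T \<in> insert S SS" "u \<in> T" "w \<in> T" for T u w \<alpha> \<beta>
    using bspec[OF insert.prems(1) that(1), rule_format, OF that(2) that(3)] .
  have ex: "\<exists>u. u \<notin> T" if "T \<in> insert S SS" for T
    using bspec[OF insert.prems(2) that] .
  have "\<exists>v. \<forall>T\<in>SS. v \<notin> T"
  proof (rule insert.IH)
    show "\<forall>S\<in>SS. \<forall>u\<in>S. \<forall>w\<in>S. \<forall>\<alpha> \<beta>. (\<lambda>i. \<alpha> * u i + \<beta> * w i) \<in> S"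
      using cl by simp
    show "\<forall>S\<in>SS. \<exists>u. u \<notin> S" using ex by simp
  qed
  then obtain w where w: "\<forall>T\<in>SS. w \<notin> T" by blast
  show ?case
  proof (cases "w \<in> S")
    case False
    then show ?thesis using w by auto
  next
    case True
    obtain u where u: "u \<notin> S" using ex[of S] by auto
    define z where "z t = (\<lambda>i. 1 * w i + t * u i)" for t :: real
    have c1: "z t \<notin> S" if "t \<noteq> 0" for t
    proof
      assume zS: "z t \<in> S"
      have "(\<lambda>i. (1/t) * z t i + (-1/t) * w i) \<in> S"
        by (rule cl[OF _ zS True]) simp
      moreover have "(\<lambda>i. (1/t) * z t i + (-1/t) * w i) = u"
      proof
        fix i
        have "(1/t) * z t i + (-1/t) * w i = ((1 * w i + t * u i) - w i) / t"
          unfolding z_def by (simp add: diff_divide_distrib)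
        also have "(1 * w i + t * u i) - w i = t * u i" by simp
        finally show "(1/t) * z t i + (-1/t) * w i = u i" using that by simp
      qed
      ultimately have "u \<in> S" by simp
      then show False using u by blast
    qed
    have c2: "s = t" if "T \<in> SS" "z s \<in> T" "z t \<in> T" for T s t
    proof (rule ccontr)
      assume st: "s \<noteq> t"
      have "(\<lambda>i. (t/(t-s)) * z s i + (-s/(t-s)) * z t i) \<in> T"
        by (rule cl[OF _ that(2) that(3)]) (simp add: that(1))
      moreover have "(\<lambda>i. (t/(t-s)) * z s i + (-s/(t-s)) * z t i) = w"
      proof
        fix i
        have h: "t - s \<noteq> 0" using st by simp
        have "(t/(t-s)) * z s i + (-s/(t-s)) * z t i = (t * (1 * w i + s * u i) - s * (1 * w i + t * u i)) / (t - s)"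
          unfolding z_def by (simp add: diff_divide_distrib)
        also have "t * (1 * w i + s * u i) - s * (1 * w i + t * u i) = (t - s) * w i" by (simp add: algebra_simps)
        finally show "(t/(t-s)) * z s i + (-s/(t-s)) * z t i = w i" using h by simp
      qed
      ultimately have "w \<in> T" by simp
      then show False using w that(1) by blast
    qed
    define B where "B = {0} \<union> (\<Union>T\<in>SS. {t. z t \<in> T})"
    have "finite B" unfolding B_def
    proof (intro finite_UnI finite_UN_I)
      show "finite {0::real}" by simp
      show "finite SS" by (rule insert.hyps(1))
      fix T assume T: "T \<in> SS"
      show "finite {t. z t \<in> T}"
      proof (rule subsingleton_finite)
        fix s t assume "s \<in> {t. z t \<in> T}" "t \<in> {t. z t \<in> T}"
        then show "s = t" using c2[OF T] by simp
      qed
    qed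
    then obtain t where t: "t \<notin> B" using ex_new_if_finite[OF infinite_UNIV_char_0] by blast
    then have "t \<noteq> 0" by (simp add: B_def)
    then have "z t \<notin> S" using c1 by simp
    moreover have "\<forall>T\<in>SS. z t \<notin> T" using t by (simp add: B_def)
    ultimately show ?thesis by blast
  qed
qed



lemma hd_0 [simp]: "higher_deriv 0 f = f" by (simp add: higher_deriv_def)
lemma hd_Suc: "higher_deriv (Suc k) f = deriv (higher_deriv k f)" by (simp add: higher_deriv_def)

lemma deriv_local:
  assumes "open I" "x \<in> I" "\<And>z. z \<in> I \<Longrightarrow> f z = g z" "(g has_real_derivative D) (at x)"
  shows "(f has_real_derivative D) (at x)" "deriv f x = D"
proof -
  show *: "(f has_real_derivative D) (at x)"
    by (rule has_field_derivative_transform_within_open[OF assms(4) assms(1) assms(2)]) (simp add: assms(3))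
  show "deriv f x = D" by (rule DERIV_imp_deriv[OF *])
qed

lemma hd_lincomb:
  fixes y :: "nat \<Rightarrow> real \<Rightarrow> real"
  assumes "open I"
    and ch: "\<And>j k x. j < m \<Longrightarrow> k < N \<Longrightarrow> x \<in> I \<Longrightarrow>
       (higher_deriv k (y j) has_real_derivative higher_deriv (Suc k) (y j) x) (at x)"
  shows "k \<le> N \<Longrightarrow> x \<in> I \<Longrightarrow>
     higher_deriv k (\<lambda>z. \<Sum>j<m. c j * y j z) x = (\<Sum>j<m. c j * higher_deriv k (y j) x)"
proof (induction k arbitrary: x)
  case 0
  then show ?case by simp
next
  case (Suc k)
  have eq: "\<And>z. z \<in> I \<Longrightarrow> higher_deriv k (\<lambda>z. \<Sum>j<m. c j * y j z) z = (\<Sum>j<m. c j * higher_deriv k (y j) z)"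
    using Suc by simp
  have "((\<lambda>z. \<Sum>j<m. c j * higher_deriv k (y j) z) has_real_derivative (\<Sum>j<m. c j * higher_deriv (Suc k) (y j) x)) (at x)"
    using Suc.prems by (intro DERIV_sum DERIV_cmult ch) auto
  note D = this
  have "deriv (higher_deriv k (\<lambda>z. \<Sum>j<m. c j * y j z)) x = (\<Sum>j<m. c j * higher_deriv (Suc k) (y j) x)"
    by (rule deriv_local(2)[OF assms(1) Suc.prems(2) eq D])
  then show ?case by (simp add: hd_Suc)
qed

lemma hd_lincomb_deriv:
  fixes y :: "nat \<Rightarrow> real \<Rightarrow> real"
  assumes "open I"
    and ch: "\<And>j k x. j < m \<Longrightarrow> k < N \<Longrightarrow> x \<in> I \<Longrightarrow>
       (higher_deriv k (y j) has_real_derivative higher_deriv (Suc k) (y j) x) (at x)"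
    and "k < N" "x \<in> I"
  shows "(higher_deriv k (\<lambda>z. \<Sum>j<m. c j * y j z) has_real_derivative
           higher_deriv (Suc k) (\<lambda>z. \<Sum>j<m. c j * y j z) x) (at x)"
proof -
  have eq: "\<And>z. z \<in> I \<Longrightarrow> higher_deriv k (\<lambda>z. \<Sum>j<m. c j * y j z) z = (\<Sum>j<m. c j * higher_deriv k (y j) z)"
    using hd_lincomb[OF assms(1) ch] assms(3) by simp
  have "((\<lambda>z. \<Sum>j<m. c j * higher_deriv k (y j) z) has_real_derivative (\<Sum>j<m. c j * higher_deriv (Suc k) (y j) x)) (at x)"
    using assms by (intro DERIV_sum DERIV_cmult ch) auto
  moreover have "higher_deriv (Suc k) (\<lambda>z. \<Sum>j<m. c j * y j z) x = (\<Sum>j<m. c j * higher_deriv (Suc k) (y j) x)"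
    using hd_lincomb[OF assms(1) ch] assms(3,4) by simp
  ultimately show ?thesis using deriv_local(1)[OF assms(1) assms(4) eq] by simp
qed

lemma span_comb:
  fixes g :: "nat \<Rightarrow> real \<Rightarrow> real" and b :: "nat \<Rightarrow> real \<Rightarrow> real"
  assumes "\<forall>i<m. \<exists>e. \<forall>x\<in>I. g i x = (\<Sum>j<p. e j * b j x)"
  shows "\<exists>E. \<forall>x\<in>I. (\<Sum>i<m. d i * g i x) = (\<Sum>j<p. E j * b j x)"
proof -
  from assms obtain ee where ee: "\<forall>i<m. \<forall>x\<in>I. g i x = (\<Sum>j<p. ee i j * b j x)"
    by metis
  show ?thesis
  proof (intro exI ballI)
    fix x assume x: "x \<in> I"
    have "(\<Sum>i<m. d i * g i x) = (\<Sum>i<m. d i * (\<Sum>j<p. ee i j * b j x))"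
      using ee x by simp
    also have "\<dots> = (\<Sum>j<p. (\<Sum>i<m. d i * ee i j) * b j x)"
      by (simp add: sum_distrib_left sum_distrib_right sum.swap[of _ "{..<m}"] mult.assoc)
    finally show "(\<Sum>i<m. d i * g i x) = (\<Sum>j<p. (\<Sum>i<m. d i * ee i j) * b j x)" .
  qed
qed

lemma dep_smooth:
  fixes y :: "real \<Rightarrow> real"
  assumes "open I"
    and ch: "\<forall>k<n. \<forall>x\<in>I. (higher_deriv k y has_real_derivative higher_deriv (Suc k) y x) (at x)"
    and rel: "\<forall>x\<in>I. (\<Sum>i<n. c i * higher_deriv i y x) = 0"
    and nz: "\<exists>i<n. c i \<noteq> 0"
  shows "\<forall>k. \<forall>x\<in>I. (higher_deriv k y has_real_derivative higher_deriv (Suc k) y x) (at x)"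
proof -
  define A where "A = {i. i < n \<and> c i \<noteq> 0}"
  have finA: "finite A" unfolding A_def by simp
  have neA: "A \<noteq> {}" using nz unfolding A_def by auto
  define m where "m = Max A"
  have mA: "m \<in> A" unfolding m_def using finA neA by (rule Max_in)
  then have mn: "m < n" and cm: "c m \<noteq> 0" unfolding A_def by auto
  have cz: "c i = 0" if "m < i" "i < n" for i
  proof (rule ccontr)
    assume "c i \<noteq> 0"
    then have "i \<in> A" using that unfolding A_def by auto
    then have "i \<le> m" unfolding m_def using Max_ge[OF finA] by blast
    then show False using that by simp
  qed
  define sp where "sp f \<longleftrightarrow> (\<exists>e. \<forall>x\<in>I. f x = (\<Sum>i<m. e i * higher_deriv i y x))" for f
  have relm: "higher_deriv m y x = (\<Sum>i<m. (- c i / c m) * higher_deriv i y x)" if x: "x \<in> I" for x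
  proof -
    have "(\<Sum>i<n. c i * higher_deriv i y x) = (\<Sum>i<Suc m. c i * higher_deriv i y x)"
      by (rule sum.mono_neutral_right) (use mn cz in auto)
    then have s0: "(\<Sum>i<m. c i * higher_deriv i y x) + c m * higher_deriv m y x = 0"
      using rel x by simp
    have "(\<Sum>i<m. (- c i / c m) * higher_deriv i y x) = (\<Sum>i<m. c i * higher_deriv i y x) * (- 1 / c m)"
      unfolding sum_distrib_right by (rule sum.cong) auto
    also have "\<dots> = higher_deriv m y x"
      using s0 cm by (simp add: field_simps)
    finally show ?thesis by simp
  qed
  have sple: "sp (higher_deriv k y)" if "k \<le> m" for k
  proof (cases "k = m")
    case True
    show ?thesis unfolding sp_def
    proof (intro exI[of _ "\<lambda>i. - c i / c m"] ballI)
      fix x assume "x \<in> I"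
      then show "higher_deriv k y x = (\<Sum>i<m. (- c i / c m) * higher_deriv i y x)"
        using relm True by simp
    qed
  next
    case False
    then have km: "k < m" using that by simp
    show ?thesis unfolding sp_def
    proof (intro exI ballI)
      fix x assume "x \<in> I"
      have "(\<Sum>i<m. (if i = k then 1 else 0) * higher_deriv i y x) = (\<Sum>i<m. if i = k then higher_deriv i y x else 0)"
        by (rule sum.cong) auto
      also have "\<dots> = higher_deriv k y x" using km by (simp add: sum.delta)
      finally show "higher_deriv k y x = (\<Sum>i<m. (if i = k then 1 else 0) * higher_deriv i y x)" by simp
    qed
  qed
  have step: "sp (higher_deriv (Suc k) y) \<and>
      (\<forall>x\<in>I. (higher_deriv k y has_real_derivative higher_deriv (Suc k) y x) (at x))"
    if "sp (higher_deriv k y)" for k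
  proof -
    from that obtain e where e: "\<forall>x\<in>I. higher_deriv k y x = (\<Sum>i<m. e i * higher_deriv i y x)"
      unfolding sp_def by blast
    have eqk: "\<And>z. z \<in> I \<Longrightarrow> higher_deriv k y z = (\<Sum>i<m. e i * higher_deriv i y z)"
      using e by blast
    have D: "((\<lambda>z. \<Sum>i<m. e i * higher_deriv i y z) has_real_derivative (\<Sum>i<m. e i * higher_deriv (Suc i) y x)) (at x)"
      if "x \<in> I" for x
    proof (intro DERIV_sum DERIV_cmult)
      fix i assume "i \<in> {..<m}"
      then have "i < n" using mn by simp
      then show "(higher_deriv i y has_real_derivative higher_deriv (Suc i) y x) (at x)"
        using ch that by blast
    qed
    have hk1: "(higher_deriv k y has_real_derivative (\<Sum>i<m. e i * higher_deriv (Suc i) y x)) (at x)"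
      if "x \<in> I" for x
      by (rule deriv_local(1)[OF assms(1) that eqk D[OF that]])
    have hk2: "higher_deriv (Suc k) y x = (\<Sum>i<m. e i * higher_deriv (Suc i) y x)" if "x \<in> I" for x
      using deriv_local(2)[OF assms(1) that eqk D[OF that]] by (simp only: hd_Suc)
    have spi: "\<forall>i<m. \<exists>e. \<forall>x\<in>I. higher_deriv (Suc i) y x = (\<Sum>j<m. e j * higher_deriv j y x)"
    proof (intro allI impI)
      fix i assume "i < m"
      then have "sp (higher_deriv (Suc i) y)" by (intro sple) simp
      then show "\<exists>e. \<forall>x\<in>I. higher_deriv (Suc i) y x = (\<Sum>j<m. e j * higher_deriv j y x)"
        unfolding sp_def .
    qed
    obtain E where E: "\<forall>x\<in>I. (\<Sum>i<m. e i * higher_deriv (Suc i) y x) = (\<Sum>j<m. E j * higher_deriv j y x)"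
      using span_comb[OF spi, of e] by blast
    have "sp (higher_deriv (Suc k) y)" unfolding sp_def
    proof (intro exI ballI)
      fix x assume "x \<in> I"
      then show "higher_deriv (Suc k) y x = (\<Sum>j<m. E j * higher_deriv j y x)"
        using hk2 E by simp
    qed
    moreover have "\<forall>x\<in>I. (higher_deriv k y has_real_derivative higher_deriv (Suc k) y x) (at x)"
      using hk1 hk2 by simp
    ultimately show ?thesis by blast
  qed
  have allsp: "sp (higher_deriv k y)" for k
  proof (induction k)
    case 0
    then show ?case using sple[of 0] by simp
  next
    case (Suc k)
    then show ?case using step by blast
  qed
  show ?thesis
  proof (intro allI)
    fix k show "\<forall>x\<in>I. (higher_deriv k y has_real_derivative higher_deriv (Suc k) y x) (at x)"
      using step[OF allsp[of k]] by blast
  qed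
qed

lemma dep_jets:
  fixes y :: "real \<Rightarrow> real"
  assumes "open I"
    and sm: "\<forall>k. \<forall>x\<in>I. (higher_deriv k y has_real_derivative higher_deriv (Suc k) y x) (at x)"
    and rel: "\<forall>x\<in>I. (\<Sum>i<n. c i * higher_deriv i y x) = 0"
  shows "\<forall>x\<in>I. (\<Sum>i<n. c i * higher_deriv (i+k) y x) = 0"
proof (induction k)
  case 0
  then show ?case using rel by simp
next
  case (Suc k)
  show ?case
  proof
    fix x assume x: "x \<in> I"
    have D1: "((\<lambda>z. \<Sum>i<n. c i * higher_deriv (i+k) y z) has_real_derivative (\<Sum>i<n. c i * higher_deriv (Suc (i+k)) y x)) (at x)"
      using sm x by (intro DERIV_sum DERIV_cmult) auto
    have D2: "((\<lambda>z. \<Sum>i<n. c i * higher_deriv (i+k) y z) has_real_derivative 0) (at x)"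
      by (rule deriv_local(1)[OF assms(1) x _ DERIV_const]) (use Suc.IH in auto)
    have "(\<Sum>i<n. c i * higher_deriv (Suc (i+k)) y x) = 0" using DERIV_unique[OF D1 D2] .
    then show "(\<Sum>i<n. c i * higher_deriv (i + Suc k) y x) = 0" by simp
  qed
qed



lemma bracket:
  fixes I :: "real set"
  assumes "open I" "is_interval I" "x \<in> I" "x0 \<in> I"
  shows "\<exists>c d. c < x \<and> c < x0 \<and> x < d \<and> x0 < d \<and> {c..d} \<subseteq> I"
proof -
  obtain e where e: "e > 0" "ball x e \<subseteq> I" using assms(1,3) open_contains_ball by blast
  obtain e' where e': "e' > 0" "ball x0 e' \<subseteq> I" using assms(1,4) open_contains_ball by blast
  define c where "c = min (x - e/2) (x0 - e'/2)"
  define d where "d = max (x + e/2) (x0 + e'/2)"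
  have cI: "c \<in> I"
  proof (cases "x - e/2 \<le> x0 - e'/2")
    case True
    then have "c = x - e/2" by (simp add: c_def)
    moreover have "x - e/2 \<in> ball x e" using e by (simp add: dist_real_def)
    ultimately show ?thesis using e by auto
  next
    case False
    then have "c = x0 - e'/2" by (simp add: c_def)
    moreover have "x0 - e'/2 \<in> ball x0 e'" using e' by (simp add: dist_real_def)
    ultimately show ?thesis using e' by auto
  qed
  have dI: "d \<in> I"
  proof (cases "x + e/2 \<le> x0 + e'/2")
    case False
    then have "d = x + e/2" by (simp add: d_def)
    moreover have "x + e/2 \<in> ball x e" using e by (simp add: dist_real_def)
    ultimately show ?thesis using e by auto
  next
    case True
    then have "d = x0 + e'/2" by (simp add: d_def)
    moreover have "x0 + e'/2 \<in> ball x0 e'" using e' by (simp add: dist_real_def)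
    ultimately show ?thesis using e' by auto
  qed
  have "{c..d} \<subseteq> I"
  proof
    fix z assume "z \<in> {c..d}"
    then show "z \<in> I"
      using is_interval_1[THEN iffD1, OF assms(2), rule_format, OF cI dI] by simp
  qed
  moreover have "c < x" "c < x0" "x < d" "x0 < d" using e e' by (auto simp: c_def d_def)
  ultimately show ?thesis by blast
qed

lemma antideriv:
  fixes f :: "real \<Rightarrow> real"
  assumes "open I" "is_interval I" "x0 \<in> I" "continuous_on I f"
  shows "\<exists>G. G x0 = 0 \<and> (\<forall>x\<in>I. (G has_real_derivative f x) (at x))"
proof -
  define G where "G x = integral {x0..x} f - integral {x..x0} f" for x
  have "G x0 = 0" by (simp add: G_def)
  moreover have "(G has_real_derivative f x) (at x)" if x: "x \<in> I" for x
  proof -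
  obtain c d where cd: "c < x" "c < x0" "x < d" "x0 < d" "{c..d} \<subseteq> I"
    using bracket[OF assms(1,2) x assms(3)] by blast
  have fc: "continuous_on {c..d} f" using assms(4) cd(5) continuous_on_subset by blast
  have int: "f integrable_on {c..z}" if "z \<le> d" for z
    using continuous_on_subset[OF fc] that by (intro integrable_continuous_interval) auto
  have Geq: "G z = integral {c..z} f - integral {c..x0} f" if "z \<in> {c<..<d}" for z
  proof (cases "x0 \<le> z")
    case True
    have "integral {c..x0} f + integral {x0..z} f = integral {c..z} f"
      using that cd True int by (intro Henstock_Kurzweil_Integration.integral_combine) auto
    moreover have "integral {z..x0} f = 0"
    proof (cases "z = x0")
      case True then show ?thesis by simp
    next
      case False then have "{z..x0} = {}" using \<open>x0 \<le> z\<close> by auto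
      then show ?thesis by simp
    qed
    ultimately show ?thesis by (simp add: G_def)
  next
    case False
    have "integral {c..z} f + integral {z..x0} f = integral {c..x0} f"
      using that cd False int by (intro Henstock_Kurzweil_Integration.integral_combine) auto
    moreover have "{x0..z} = {}" using False by auto
    ultimately show ?thesis by (simp add: G_def)
  qed
  have "((\<lambda>z. integral {c..z} f) has_real_derivative f x) (at x within {c..d})"
    using cd by (intro integral_has_real_derivative fc) auto
  moreover have "at x within {c..d} = at x"
    using cd by (intro at_within_interior) auto
  ultimately have "((\<lambda>z. integral {c..z} f) has_real_derivative f x) (at x)" by simp
  then have "((\<lambda>z. integral {c..z} f - integral {c..x0} f) has_real_derivative f x) (at x)"
    using DERIV_diff[OF _ DERIV_const] by fastforce
  then show "(G has_real_derivative f x) (at x)"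
    by (rule has_field_derivative_transform_within_open[of _ _ _ "{c<..<d}"]) (use cd Geq in auto)
  qed
  ultimately show ?thesis by blast
qed

lemma mvt_pow_ge:
  fixes g g' :: "real \<Rightarrow> real"
  assumes "g x0 = 0" "C \<ge> 0" "x0 \<le> x"
    and D: "\<And>s. x0 \<le> s \<Longrightarrow> s \<le> x \<Longrightarrow> (g has_real_derivative g' s) (at s)"
    and B: "\<And>s. x0 \<le> s \<Longrightarrow> s \<le> x \<Longrightarrow> \<bar>g' s\<bar> \<le> C * (s - x0) ^ k"
  shows "\<bar>g x\<bar> \<le> C * (x - x0) ^ Suc k / Suc k"
proof -
  define \<phi> where "\<phi> s = C * (s - x0) ^ Suc k / Suc k" for s
  have Dphi: "(\<phi> has_real_derivative C * (s - x0) ^ k) (at s)" for s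
    unfolding \<phi>_def by (auto intro!: derivative_eq_intros simp del: power_Suc)
  have cg: "continuous_on {x0..x} g"
    by (rule continuous_at_imp_continuous_on) (metis DERIV_isCont D atLeastAtMost_iff)
  have cphi: "continuous_on {x0..x} \<phi>"
    by (rule continuous_at_imp_continuous_on) (metis DERIV_isCont Dphi)
  have "(\<phi> x0 - g x0) \<le> (\<phi> x - g x)"
  proof (rule DERIV_nonneg_imp_increasing_open[OF assms(3)])
    fix s assume s: "x0 < s" "s < x"
    show "\<exists>y. ((\<lambda>s. \<phi> s - g s) has_real_derivative y) (at s) \<and> 0 \<le> y"
      using DERIV_diff[OF Dphi D] B[of s] s by (intro exI[of _ "C * (s - x0) ^ k - g' s"] conjI) (auto simp: abs_le_iff)
  qed (intro continuous_on_diff cphi cg)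
  moreover have "(\<phi> x0 + g x0) \<le> (\<phi> x + g x)"
  proof (rule DERIV_nonneg_imp_increasing_open[OF assms(3)])
    fix s assume s: "x0 < s" "s < x"
    show "\<exists>y. ((\<lambda>s. \<phi> s + g s) has_real_derivative y) (at s) \<and> 0 \<le> y"
      using DERIV_add[OF Dphi D] B[of s] s by (intro exI[of _ "C * (s - x0) ^ k + g' s"] conjI) (auto simp: abs_le_iff)
  qed (intro continuous_on_add cphi cg)
  moreover have "\<phi> x0 = 0" by (simp add: \<phi>_def)
  ultimately show ?thesis using assms(1) by (simp add: \<phi>_def abs_le_iff)
qed

lemma mvt_pow_le:
  fixes g g' :: "real \<Rightarrow> real"
  assumes "g x0 = 0" "C \<ge> 0" "x \<le> x0"
    and D: "\<And>s. x \<le> s \<Longrightarrow> s \<le> x0 \<Longrightarrow> (g has_real_derivative g' s) (at s)"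
    and B: "\<And>s. x \<le> s \<Longrightarrow> s \<le> x0 \<Longrightarrow> \<bar>g' s\<bar> \<le> C * (x0 - s) ^ k"
  shows "\<bar>g x\<bar> \<le> C * (x0 - x) ^ Suc k / Suc k"
proof -
  define \<phi> where "\<phi> s = C * (x0 - s) ^ Suc k / Suc k" for s
  have Dphi: "(\<phi> has_real_derivative - (C * (x0 - s) ^ k)) (at s)" for s
    unfolding \<phi>_def by (auto intro!: derivative_eq_intros simp del: power_Suc)
  have cg: "continuous_on {x..x0} g"
    by (rule continuous_at_imp_continuous_on) (metis DERIV_isCont D atLeastAtMost_iff)
  have cphi: "continuous_on {x..x0} \<phi>"
    by (rule continuous_at_imp_continuous_on) (metis DERIV_isCont Dphi)
  have "(\<phi> x - g x) \<ge> (\<phi> x0 - g x0)"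
  proof (rule DERIV_nonpos_imp_decreasing_open[OF assms(3)])
    fix s assume s: "x < s" "s < x0"
    show "\<exists>y. ((\<lambda>s. \<phi> s - g s) has_real_derivative y) (at s) \<and> y \<le> 0"
      using DERIV_diff[OF Dphi D] B[of s] s
      by (intro exI[of _ "- (C * (x0 - s) ^ k) - g' s"] conjI) (auto simp: abs_le_iff)
  qed (intro continuous_on_diff cphi cg)
  moreover have "(\<phi> x + g x) \<ge> (\<phi> x0 + g x0)"
  proof (rule DERIV_nonpos_imp_decreasing_open[OF assms(3)])
    fix s assume s: "x < s" "s < x0"
    show "\<exists>y. ((\<lambda>s. \<phi> s + g s) has_real_derivative y) (at s) \<and> y \<le> 0"
      using DERIV_add[OF Dphi D] B[of s] s
      by (intro exI[of _ "- (C * (x0 - s) ^ k) + g' s"] conjI) (auto simp: abs_le_iff)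
  qed (intro continuous_on_add cphi cg)
  moreover have "\<phi> x0 = 0" by (simp add: \<phi>_def)
  ultimately show ?thesis using assms(1) by (simp add: \<phi>_def abs_le_iff)
qed

lemma mvt_pow:
  fixes g g' :: "real \<Rightarrow> real"
  assumes "g x0 = 0" "C \<ge> 0"
    and D: "\<And>s. min x0 x \<le> s \<Longrightarrow> s \<le> max x0 x \<Longrightarrow> (g has_real_derivative g' s) (at s)"
    and B: "\<And>s. min x0 x \<le> s \<Longrightarrow> s \<le> max x0 x \<Longrightarrow> \<bar>g' s\<bar> \<le> C * \<bar>s - x0\<bar> ^ k"
  shows "\<bar>g x\<bar> \<le> C * \<bar>x - x0\<bar> ^ Suc k / Suc k"
proof (cases "x0 \<le> x")
  case True
  have "\<bar>g x\<bar> \<le> C * (x - x0) ^ Suc k / Suc k"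
  proof (rule mvt_pow_ge)
    show "g x0 = 0" "C \<ge> 0" "x0 \<le> x" using assms True by auto
    fix s assume s: "x0 \<le> s" "s \<le> x"
    show "(g has_real_derivative g' s) (at s)" using D s True by simp
    show "\<bar>g' s\<bar> \<le> C * (s - x0) ^ k" using B[of s] s True by simp
  qed
  then show ?thesis using True by simp
next
  case False
  have "\<bar>g x\<bar> \<le> C * (x0 - x) ^ Suc k / Suc k"
  proof (rule mvt_pow_le)
    show "g x0 = 0" "C \<ge> 0" using assms by auto
    show "x \<le> x0" using False by simp
    fix s assume s: "x \<le> s" "s \<le> x0"
    show "(g has_real_derivative g' s) (at s)" using D s False by simp
    have "\<bar>s - x0\<bar> = x0 - s" using s by simp
    then show "\<bar>g' s\<bar> \<le> C * (x0 - s) ^ k" using B[of s] s False by simp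
  qed
  moreover have "\<bar>x - x0\<bar> = x0 - x" using False by simp
  ultimately show ?thesis by simp
qed

lemma has_real_derivative_sequence:
  fixes S :: "real set"
  assumes cvs: "convex S"
      and df:  "\<And>n x. x \<in> S \<Longrightarrow> (f n has_field_derivative f' n x) (at x within S)"
      and conv: "\<And>e. 0 < e \<Longrightarrow> \<exists>N. \<forall>n x. n \<ge> N \<longrightarrow> x \<in> S \<longrightarrow> \<bar>f' n x - g' x\<bar> \<le> e"
      and x: "x \<in> S" and tf: "((\<lambda>n. f n x) \<longlongrightarrow> l) sequentially"
    shows "\<exists>g. \<forall>x \<in> S. ((\<lambda>n. f n x) \<longlongrightarrow> g x) sequentially \<and>
                       (g has_field_derivative (g' x)) (at x within S)"
  unfolding has_field_derivative_def
proof (rule has_derivative_sequence [OF cvs _ _ x])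
  show "(\<lambda>n. f n x) \<longlonglongrightarrow> l"
    by (rule tf)
next
  have **: "\<exists>N. \<forall>n\<ge>N. \<forall>x\<in>S. \<forall>h. \<bar>f' n x * h - g' x * h\<bar> \<le> \<epsilon> * \<bar>h\<bar>"
    if eps: "\<epsilon> > 0" for \<epsilon>::real
  proof -
    obtain N where N: "\<forall>n x. n \<ge> N \<longrightarrow> x \<in> S \<longrightarrow> \<bar>f' n x - g' x\<bar> \<le> \<epsilon>" using conv[OF eps] by blast
    show ?thesis
    proof (intro exI allI ballI impI)
      fix n x h assume "N \<le> n" "x \<in> S"
      then have "\<bar>f' n x - g' x\<bar> * \<bar>h\<bar> \<le> \<epsilon> * \<bar>h\<bar>" using N by (intro mult_right_mono) auto
      then show "\<bar>f' n x * h - g' x * h\<bar> \<le> \<epsilon> * \<bar>h\<bar>"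
        by (simp add: abs_mult[symmetric] left_diff_distrib)
    qed
  qed
  show "\<And>e. e > 0 \<Longrightarrow> \<forall>\<^sub>F n in sequentially. \<forall>x\<in>S. \<forall>h. norm (f' n x * h - g' x * h) \<le> e * norm h"
    unfolding eventually_sequentially real_norm_def by (blast intro: **)
qed (metis has_field_derivative_def df)

lemma cont_bound:
  fixes f :: "real \<Rightarrow> real"
  assumes "continuous_on S f" "compact S"
  shows "\<exists>K. \<forall>x\<in>S. \<bar>f x\<bar> \<le> K"
proof -
  have "bounded (f ` S)" by (intro compact_imp_bounded compact_continuous_image assms)
  then obtain K where "\<forall>y\<in>f ` S. norm y \<le> K" using bounded_iff by blast
  then show ?thesis by auto
qed



context
  fixes n :: nat and a :: "nat \<Rightarrow> real \<Rightarrow> real" and I :: "real set" and x0 :: real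
  assumes n1: "n \<ge> 1" and oI: "open I" and iI: "is_interval I" and x0I: "x0 \<in> I"
    and ac: "\<forall>i<n. continuous_on I (a i)"
begin

definition FF :: "(nat \<Rightarrow> real \<Rightarrow> real) \<Rightarrow> nat \<Rightarrow> real \<Rightarrow> real" where
  "FF Y i x = (if Suc i < n then Y (Suc i) x else - (\<Sum>j<n. a j x * Y j x))"

definition prim :: "(real \<Rightarrow> real) \<Rightarrow> real \<Rightarrow> real" where
  "prim f = (SOME G. G x0 = 0 \<and> (\<forall>x\<in>I. (G has_real_derivative f x) (at x)))"

lemma prim:
  assumes "continuous_on I f"
  shows "prim f x0 = 0 \<and> (\<forall>x\<in>I. (prim f has_real_derivative f x) (at x))"
proof -
  have "\<exists>G. G x0 = 0 \<and> (\<forall>x\<in>I. (G has_real_derivative f x) (at x))"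
    by (rule antideriv[OF oI iI x0I assms])
  then show ?thesis unfolding prim_def by (rule someI_ex)
qed

primrec pic :: "(nat \<Rightarrow> real) \<Rightarrow> nat \<Rightarrow> nat \<Rightarrow> real \<Rightarrow> real" where
  "pic v 0 = (\<lambda>i x. v i)"
| "pic v (Suc k) = (\<lambda>i x. v i + prim (FF (pic v k) i) x)"

lemma FF_cont:
  assumes "\<forall>j<n. continuous_on I (Y j)" "i < n"
  shows "continuous_on I (FF Y i)"
proof (cases "Suc i < n")
  case True
  then show ?thesis using assms unfolding FF_def by simp
next
  case False
  have "continuous_on I (\<lambda>x. - (\<Sum>j<n. a j x * Y j x))"
    using assms ac by (intro continuous_intros) auto
  then show ?thesis using False unfolding FF_def by simp
qed

lemma cont_of_deriv:
  assumes "\<forall>x\<in>I. (h has_real_derivative h' x) (at x)"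
  shows "continuous_on I h"
  by (rule continuous_at_imp_continuous_on) (metis DERIV_isCont assms)

lemma pic_cont: "\<forall>i<n. continuous_on I (pic v k i)"
proof (induction k)
  case 0
  then show ?case by simp
next
  case (Suc k)
  show ?case
  proof (intro allI impI)
    fix i assume i: "i < n"
    have "\<forall>x\<in>I. (prim (FF (pic v k) i) has_real_derivative FF (pic v k) i x) (at x)"
      using prim[OF FF_cont[OF Suc.IH i]] by blast
    then have "continuous_on I (prim (FF (pic v k) i))" by (rule cont_of_deriv)
    then show "continuous_on I (pic v (Suc k) i)" by (simp add: continuous_intros)
  qed
qed

lemma pic_deriv:
  assumes "i < n" "x \<in> I"
  shows "(pic v (Suc k) i has_real_derivative FF (pic v k) i x) (at x)"
proof -
  have "(prim (FF (pic v k) i) has_real_derivative FF (pic v k) i x) (at x)"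
    using prim[OF FF_cont[OF pic_cont assms(1)]] assms(2) by blast
  then have "((\<lambda>x. v i + prim (FF (pic v k) i) x) has_real_derivative 0 + FF (pic v k) i x) (at x)"
    by (intro DERIV_add DERIV_const)
  then show ?thesis by simp
qed

lemma pic_x0: "i < n \<Longrightarrow> pic v k i x0 = v i"
proof (cases k)
  case (Suc k')
  assume i: "i < n"
  have "prim (FF (pic v k') i) x0 = 0"
    using prim[OF FF_cont[OF pic_cont i]] by blast
  then show ?thesis using Suc by simp
qed simp

lemma FF_diff: "FF Y i x - FF Z i x = FF (\<lambda>j z. Y j z - Z j z) i x"
  unfolding FF_def by (simp add: sum_subtractf algebra_simps)

lemma FF_bound:
  assumes "A \<ge> 0" "\<forall>j<n. \<bar>a j x\<bar> \<le> A"
  shows "(\<Sum>i<n. \<bar>FF Y i x\<bar>) \<le> (1 + A) * (\<Sum>j<n. \<bar>Y j x\<bar>)"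
proof -
  obtain m where m: "n = Suc m" using n1 by (cases n) auto
  have s1: "(\<Sum>i<m. \<bar>FF Y i x\<bar>) = (\<Sum>i<m. \<bar>Y (Suc i) x\<bar>)"
    unfolding FF_def by (rule sum.cong) (auto simp: m)
  have s2: "(\<Sum>i<m. \<bar>Y (Suc i) x\<bar>) \<le> (\<Sum>j<n. \<bar>Y j x\<bar>)"
    unfolding m sum.lessThan_Suc_shift by simp
  have "\<bar>FF Y m x\<bar> = \<bar>\<Sum>j<n. a j x * Y j x\<bar>" unfolding FF_def using m by simp
  also have "\<dots> \<le> (\<Sum>j<n. \<bar>a j x * Y j x\<bar>)" by (rule sum_abs)
  also have "\<dots> \<le> (\<Sum>j<n. A * \<bar>Y j x\<bar>)"
    using assms(2) by (intro sum_mono) (auto simp: abs_mult intro: mult_right_mono)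
  also have "\<dots> = A * (\<Sum>j<n. \<bar>Y j x\<bar>)" by (simp add: sum_distrib_left)
  finally have s3: "\<bar>FF Y m x\<bar> \<le> A * (\<Sum>j<n. \<bar>Y j x\<bar>)" .
  have "(\<Sum>i<n. \<bar>FF Y i x\<bar>) = (\<Sum>i<m. \<bar>FF Y i x\<bar>) + \<bar>FF Y m x\<bar>" by (simp add: m)
  also have "\<dots> \<le> (\<Sum>j<n. \<bar>Y j x\<bar>) + A * (\<Sum>j<n. \<bar>Y j x\<bar>)" using s1 s2 s3 by linarith
  also have "\<dots> = (1 + A) * (\<Sum>j<n. \<bar>Y j x\<bar>)" by (simp add: algebra_simps)
  finally show ?thesis .
qed

lemma sgn_mul_self: "sgn (u::real) * u = \<bar>u\<bar>"
  by (cases "u < 0") (auto simp: sgn_if)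

lemma pic_est:
  assumes cd: "c \<le> x0" "x0 \<le> d" "{c..d} \<subseteq> I"
    and A: "A \<ge> 0" "\<forall>j<n. \<forall>x\<in>{c..d}. \<bar>a j x\<bar> \<le> A"
    and B: "\<forall>x\<in>{c..d}. (\<Sum>i<n. \<bar>pic v 1 i x - pic v 0 i x\<bar>) \<le> B"
  shows "x \<in> {c..d} \<Longrightarrow> (\<Sum>i<n. \<bar>pic v (Suc k) i x - pic v k i x\<bar>) \<le> B * (1+A)^k * \<bar>x - x0\<bar>^k / fact k"
proof (induction k arbitrary: x)
  case 0
  then show ?case using B by simp
next
  case (Suc k)
  define M where "M = 1 + A"
  have M0: "M \<ge> 0" using A by (simp add: M_def)
  have B0: "B \<ge> 0"
  proof -
    have "0 \<le> (\<Sum>i<n. \<bar>pic v 1 i x0 - pic v 0 i x0\<bar>)" by (rule sum_nonneg) simp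
    also have "\<dots> \<le> B" using B cd by auto
    finally show ?thesis .
  qed
  define \<Delta> where "\<Delta> k' i z = pic v (Suc k') i z - pic v k' i z" for k' i z
  define \<sigma> where "\<sigma> i = sgn (\<Delta> (Suc k) i x)" for i
  define g where "g s = (\<Sum>i<n. \<sigma> i * \<Delta> (Suc k) i s)" for s
  define g' where "g' s = (\<Sum>i<n. \<sigma> i * FF (\<Delta> k) i s)" for s
  define C where "C = B * M^(Suc k) / fact k"
  have C0: "C \<ge> 0" using B0 M0 by (simp add: C_def)
  have g0: "g x0 = 0" unfolding g_def \<Delta>_def by (intro sum.neutral) (simp add: pic_x0 del: pic.simps)
  have sub: "s \<in> {c..d}" if "min x0 x \<le> s" "s \<le> max x0 x" for s
    using that Suc.prems cd by auto
  have gD: "(g has_real_derivative g' s) (at s)" if "min x0 x \<le> s" "s \<le> max x0 x" for s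
  proof -
    have sI: "s \<in> I" using sub[OF that] cd by auto
    have "(g has_real_derivative (\<Sum>i<n. \<sigma> i * (FF (pic v (Suc k)) i s - FF (pic v k) i s))) (at s)"
      unfolding g_def \<Delta>_def
      by (intro DERIV_sum DERIV_cmult DERIV_diff pic_deriv sI) auto
    moreover have "(\<Sum>i<n. \<sigma> i * (FF (pic v (Suc k)) i s - FF (pic v k) i s)) = g' s"
      unfolding g'_def \<Delta>_def FF_diff by simp
    ultimately show ?thesis by simp
  qed
  have gB: "\<bar>g' s\<bar> \<le> C * \<bar>s - x0\<bar> ^ k" if "min x0 x \<le> s" "s \<le> max x0 x" for s
  proof -
    have "\<bar>g' s\<bar> \<le> (\<Sum>i<n. \<bar>\<sigma> i * FF (\<Delta> k) i s\<bar>)" unfolding g'_def by (rule sum_abs)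
    also have "\<dots> \<le> (\<Sum>i<n. \<bar>FF (\<Delta> k) i s\<bar>)"
    proof (rule sum_mono)
      fix i
      have "\<bar>\<sigma> i\<bar> \<le> 1" by (simp add: \<sigma>_def abs_sgn_eq)
      then show "\<bar>\<sigma> i * FF (\<Delta> k) i s\<bar> \<le> \<bar>FF (\<Delta> k) i s\<bar>"
        by (simp add: abs_mult mult_left_le_one_le)
    qed
    also have "\<dots> \<le> M * (\<Sum>j<n. \<bar>\<Delta> k j s\<bar>)"
      unfolding M_def using A sub[OF that] by (intro FF_bound) auto
    also have "\<dots> \<le> M * (B * M^k * \<bar>s - x0\<bar>^k / fact k)"
      using Suc.IH[OF sub[OF that]] M0 unfolding \<Delta>_def M_def by (intro mult_left_mono) auto
    also have "\<dots> = C * \<bar>s - x0\<bar> ^ k" by (simp add: C_def algebra_simps)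
    finally show ?thesis .
  qed
  have "\<bar>g x\<bar> \<le> C * \<bar>x - x0\<bar> ^ Suc k / Suc k"
    by (rule mvt_pow[OF g0 C0 gD gB])
  moreover have "g x = (\<Sum>i<n. \<bar>\<Delta> (Suc k) i x\<bar>)"
    unfolding g_def \<sigma>_def by (simp add: sgn_mul_self)
  moreover have "C * \<bar>x - x0\<bar> ^ Suc k / Suc k = B * M ^ Suc k * \<bar>x - x0\<bar> ^ Suc k / fact (Suc k)"
    by (simp add: C_def fact_Suc field_simps)
  ultimately show ?case unfolding \<Delta>_def M_def by simp
qed

definition Yinf :: "(nat \<Rightarrow> real) \<Rightarrow> nat \<Rightarrow> real \<Rightarrow> real" where
  "Yinf v i x = v i + (\<Sum>j. pic v (Suc j) i x - pic v j i x)"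

lemma a_bound:
  assumes "{c..d} \<subseteq> I"
  shows "\<exists>A\<ge>0. \<forall>j<n. \<forall>x\<in>{c..d}. \<bar>a j x\<bar> \<le> A"
proof -
  have "\<forall>j<n. \<exists>K. \<forall>x\<in>{c..d}. \<bar>a j x\<bar> \<le> K"
    using ac assms by (metis cont_bound compact_Icc continuous_on_subset)
  then obtain K where K: "\<forall>j<n. \<forall>x\<in>{c..d}. \<bar>a j x\<bar> \<le> K j" by metis
  define A where "A = (\<Sum>j<n. \<bar>K j\<bar>)"
  have "\<bar>a j x\<bar> \<le> A" if "j < n" "x \<in> {c..d}" for j x
  proof -
    have "\<bar>a j x\<bar> \<le> \<bar>K j\<bar>" using K that by fastforce
    also have "\<bar>K j\<bar> \<le> A" unfolding A_def by (rule member_le_sum) (use that in auto)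
    finally show ?thesis .
  qed
  moreover have "A \<ge> 0" unfolding A_def by (simp add: sum_nonneg)
  ultimately show ?thesis by blast
qed

lemma pic_unif:
  assumes cd: "c \<le> x0" "x0 \<le> d" "{c..d} \<subseteq> I" and i: "i < n"
  shows "\<forall>e>0. \<exists>N. \<forall>k\<ge>N. \<forall>x\<in>{c..d}. \<bar>pic v k i x - Yinf v i x\<bar> < e"
proof -
  obtain A where A: "A \<ge> 0" "\<forall>j<n. \<forall>x\<in>{c..d}. \<bar>a j x\<bar> \<le> A"
    using a_bound[OF cd(3)] by blast
  have "continuous_on {c..d} (\<lambda>x. \<Sum>i<n. \<bar>pic v 1 i x - pic v 0 i x\<bar>)"
  proof -
    have pc: "\<And>k i. i < n \<Longrightarrow> continuous_on {c..d} (pic v k i)"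
      using pic_cont cd(3) continuous_on_subset by blast
    show ?thesis
      by (intro continuous_on_sum continuous_on_rabs continuous_on_diff) (use pc in \<open>auto simp del: pic.simps\<close>)
  qed
  then obtain B where B: "\<forall>x\<in>{c..d}. \<bar>\<Sum>i<n. \<bar>pic v 1 i x - pic v 0 i x\<bar>\<bar> \<le> B"
    using cont_bound compact_Icc by blast
  then have B': "\<forall>x\<in>{c..d}. (\<Sum>i<n. \<bar>pic v 1 i x - pic v 0 i x\<bar>) \<le> B" by auto
  have "x0 \<in> {c..d}" using cd by simp
  then have B0: "B \<ge> 0" using B by (meson abs_ge_zero order_trans)
  define M where "M = 1 + A"
  define L where "L = d - c"
  have M0: "M \<ge> 0" using A by (simp add: M_def)
  define \<Delta> where "\<Delta> j x = pic v (Suc j) i x - pic v j i x" for j x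
  have bnd: "\<bar>\<Delta> j x\<bar> \<le> B * (M*L)^j / fact j" if x: "x \<in> {c..d}" for j x
  proof -
    have "\<bar>\<Delta> j x\<bar> \<le> (\<Sum>i<n. \<bar>pic v (Suc j) i x - pic v j i x\<bar>)"
      unfolding \<Delta>_def by (rule member_le_sum[where f="\<lambda>i. \<bar>pic v (Suc j) i x - pic v j i x\<bar>"]) (use i in auto)
    also have "\<dots> \<le> B * M^j * \<bar>x - x0\<bar>^j / fact j"
      unfolding M_def by (rule pic_est[OF cd A B' x])
    also have "\<dots> \<le> B * M^j * L^j / fact j"
    proof -
      have "\<bar>x - x0\<bar> \<le> L" using x cd by (auto simp: L_def)
      then have "\<bar>x - x0\<bar>^j \<le> L^j" by (intro power_mono) auto
      then show ?thesis using B0 M0 by (intro divide_right_mono mult_left_mono) auto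
    qed
    also have "\<dots> = B * (M*L)^j / fact j" by (simp add: power_mult_distrib)
    finally show ?thesis .
  qed
  have sm: "summable (\<lambda>j. B * (M*L)^j / fact j)"
  proof -
    have "summable (\<lambda>j. B * (inverse (fact j) * (M*L)^j))"
      by (intro summable_mult summable_exp)
    moreover have "(\<lambda>j. B * (inverse (fact j) * (M*L)^j)) = (\<lambda>j. B * (M*L)^j / fact j)"
      by (rule ext) (simp add: divide_inverse)
    ultimately show ?thesis by simp
  qed
  have ul: "uniform_limit {c..d} (\<lambda>k x. \<Sum>j<k. \<Delta> j x) (\<lambda>x. suminf (\<lambda>j. \<Delta> j x)) sequentially"
    by (rule Weierstrass_m_test[OF _ sm]) (use bnd in auto)
  have tel: "pic v k i x = v i + (\<Sum>j<k. \<Delta> j x)" for k x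
    unfolding \<Delta>_def sum_lessThan_telescope[of "\<lambda>j. pic v j i x"] by simp
  have Yeq: "Yinf v i x = v i + suminf (\<lambda>j. \<Delta> j x)" for x
    unfolding Yinf_def \<Delta>_def by simp
  show ?thesis
  proof (intro allI impI)
    fix e :: real assume e: "e > 0"
    obtain N where N: "\<forall>k\<ge>N. \<forall>x\<in>{c..d}. dist (\<Sum>j<k. \<Delta> j x) (suminf (\<lambda>j. \<Delta> j x)) < e"
      using ul e unfolding uniform_limit_sequentially_iff by blast
    show "\<exists>N. \<forall>k\<ge>N. \<forall>x\<in>{c..d}. \<bar>pic v k i x - Yinf v i x\<bar> < e"
      using N by (intro exI[of _ N]) (auto simp: tel Yeq dist_real_def)
  qed
qed

lemma Yinf_x0: "i < n \<Longrightarrow> Yinf v i x0 = v i"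
  by (simp add: Yinf_def pic_x0 del: pic.simps)

lemma Yinf_deriv:
  assumes i: "i < n" and x: "x \<in> I"
  shows "(Yinf v i has_real_derivative FF (Yinf v) i x) (at x)"
proof -
  obtain c d where cd: "c < x" "c < x0" "x < d" "x0 < d" "{c..d} \<subseteq> I"
    using bracket[OF oI iI x x0I] by blast
  obtain A where A: "A \<ge> 0" "\<forall>j<n. \<forall>x\<in>{c..d}. \<bar>a j x\<bar> \<le> A"
    using a_bound[OF cd(5)] by blast
  define M where "M = 1 + A"
  have M1: "M \<ge> 1" using A by (simp add: M_def)
  have allc: "\<exists>N. \<forall>k\<ge>N. \<forall>j<n. \<forall>z\<in>{c..d}. \<bar>pic v k j z - Yinf v j z\<bar> < e" if e: "e > 0" for e
  proof -
    have "\<forall>j\<in>{..<n}. eventually (\<lambda>k. \<forall>z\<in>{c..d}. \<bar>pic v k j z - Yinf v j z\<bar> < e) sequentially"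
    proof
      fix j assume "j \<in> {..<n}"
      then have "\<exists>N. \<forall>k\<ge>N. \<forall>z\<in>{c..d}. \<bar>pic v k j z - Yinf v j z\<bar> < e"
        using pic_unif[of c d j v] cd e by auto
      then show "eventually (\<lambda>k. \<forall>z\<in>{c..d}. \<bar>pic v k j z - Yinf v j z\<bar> < e) sequentially"
        unfolding eventually_sequentially .
    qed
    then have "eventually (\<lambda>k. \<forall>j\<in>{..<n}. \<forall>z\<in>{c..d}. \<bar>pic v k j z - Yinf v j z\<bar> < e) sequentially"
      by (intro eventually_ball_finite) auto
    then show ?thesis unfolding eventually_sequentially by auto
  qed
  define S where "S = {c<..<d}"
  have SI: "S \<subseteq> {c..d}" by (auto simp: S_def)
  have "\<exists>g. \<forall>z \<in> S. ((\<lambda>k. pic v (Suc k) i z) \<longlongrightarrow> g z) sequentially \<and>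
                       (g has_field_derivative (FF (Yinf v) i z)) (at z within S)"
  proof (rule has_real_derivative_sequence[where x=x0 and l="v i"])
    show "convex S" by (simp add: S_def)
    show "x0 \<in> S" using cd by (simp add: S_def)
    show "(\<lambda>k. pic v (Suc k) i x0) \<longlonglongrightarrow> v i"
      using pic_x0[OF i] by (simp del: pic.simps)
    fix k z assume z: "z \<in> S"
    then have "z \<in> I" using SI cd(5) by auto
    then show "(pic v (Suc k) i has_field_derivative FF (pic v k) i z) (at z within S)"
      using pic_deriv[OF i] has_field_derivative_at_within by blast
  next
    fix e :: real assume e: "e > 0"
    define e' where "e' = e / (M * n)"
    have e': "e' > 0" using e M1 n1 by (simp add: e'_def)
    obtain N where N: "\<forall>k\<ge>N. \<forall>j<n. \<forall>z\<in>{c..d}. \<bar>pic v k j z - Yinf v j z\<bar> < e'"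
      using allc[OF e'] by blast
    show "\<exists>N. \<forall>k z. k \<ge> N \<longrightarrow> z \<in> S \<longrightarrow> \<bar>FF (pic v k) i z - FF (Yinf v) i z\<bar> \<le> e"
    proof (intro exI[of _ N] allI impI)
      fix k z assume k: "k \<ge> N" and z: "z \<in> S"
      define W where "W j z = pic v k j z - Yinf v j z" for j z
      have "\<bar>FF (pic v k) i z - FF (Yinf v) i z\<bar> = \<bar>FF W i z\<bar>" unfolding FF_diff W_def ..
      also have "\<dots> \<le> (\<Sum>i<n. \<bar>FF W i z\<bar>)"
        by (rule member_le_sum[where f="\<lambda>i. \<bar>FF W i z\<bar>"]) (use i in auto)
      also have "\<dots> \<le> M * (\<Sum>j<n. \<bar>W j z\<bar>)"
        unfolding M_def using A z SI by (intro FF_bound) auto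
      also have "\<dots> \<le> M * (\<Sum>j<n. e')"
      proof (intro mult_left_mono sum_mono)
        fix j assume "j \<in> {..<n}"
        then have "\<bar>pic v k j z - Yinf v j z\<bar> < e'" using N k z SI by auto
        then show "\<bar>W j z\<bar> \<le> e'" unfolding W_def by simp
      qed (use M1 in simp)
      also have "\<dots> = e" using M1 n1 by (simp add: e'_def)
      finally show "\<bar>FF (pic v k) i z - FF (Yinf v) i z\<bar> \<le> e" .
    qed
  qed
  then obtain g where g: "\<forall>z \<in> S. ((\<lambda>k. pic v (Suc k) i z) \<longlongrightarrow> g z) sequentially \<and>
                       (g has_field_derivative (FF (Yinf v) i z)) (at z within S)" by blast
  have geq: "g z = Yinf v i z" if z: "z \<in> S" for z
  proof -
    have "(\<lambda>k. pic v k i z) \<longlonglongrightarrow> Yinf v i z"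
    proof (rule LIMSEQ_I)
      fix r :: real assume "r > 0"
      then obtain N where N: "\<forall>k\<ge>N. \<forall>j<n. \<forall>z\<in>{c..d}. \<bar>pic v k j z - Yinf v j z\<bar> < r"
        using allc by blast
      have zc: "z \<in> {c..d}" using z SI by auto
      show "\<exists>no. \<forall>k\<ge>no. norm (pic v k i z - Yinf v i z) < r"
      proof (intro exI[of _ N] allI impI)
        fix k assume "k \<ge> N"
        then show "norm (pic v k i z - Yinf v i z) < r" using N zc i by simp
      qed
    qed
    then have "(\<lambda>k. pic v (Suc k) i z) \<longlonglongrightarrow> Yinf v i z" by (rule LIMSEQ_Suc)
    then show ?thesis using g z LIMSEQ_unique by blast
  qed
  have xS: "x \<in> S" using cd by (simp add: S_def)
  have oS: "open S" by (simp add: S_def)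
  have "(g has_field_derivative (FF (Yinf v) i x)) (at x)"
    using g xS at_within_open[OF xS oS] by auto
  then show ?thesis
    by (rule has_field_derivative_transform_within_open[OF _ oS xS]) (use geq in auto)
qed

lemma existence:
  "\<exists>y. is_linear_ode_solution n a I y \<and> (\<forall>k<n. higher_deriv k y x0 = v k)"
proof -
  define y where "y = Yinf v 0"
  have hdS: "higher_deriv (Suc k) y x = FF (Yinf v) k x"
    if "k < n" "x \<in> I" "\<forall>z\<in>I. higher_deriv k y z = Yinf v k z" for k x
  proof -
    have "deriv (higher_deriv k y) x = FF (Yinf v) k x"
      by (rule deriv_local(2)[OF oI that(2) _ Yinf_deriv[OF that(1,2)]]) (use that(3) in auto)
    then show ?thesis by (simp add: hd_Suc)
  qed
  have hdk: "k < n \<Longrightarrow> \<forall>z\<in>I. higher_deriv k y z = Yinf v k z" for k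
  proof (induction k)
    case 0
    then show ?case by (simp add: y_def)
  next
    case (Suc k)
    show ?case
    proof
      fix z assume z: "z \<in> I"
      have "higher_deriv (Suc k) y z = FF (Yinf v) k z"
        using hdS[of k z] Suc z by simp
      then show "higher_deriv (Suc k) y z = Yinf v (Suc k) z"
        using Suc.prems by (simp add: FF_def)
    qed
  qed
  obtain m where m: "n = Suc m" using n1 by (cases n) auto
  have nd: "n_times_differentiable_on n y I"
    unfolding n_times_differentiable_on_def
  proof (intro allI impI ballI)
    fix k x assume k: "k < n" and x: "x \<in> I"
    have "(higher_deriv k y has_real_derivative FF (Yinf v) k x) (at x)"
      by (rule deriv_local(1)[OF oI x _ Yinf_deriv[OF k x]]) (use hdk[OF k] in auto)
    then show "(higher_deriv k y has_real_derivative higher_deriv (Suc k) y x) (at x)"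
      using hdS[OF k x hdk[OF k]] by simp
  qed
  have ode: "higher_deriv n y x + (\<Sum>i<n. a i x * higher_deriv i y x) = 0" if x: "x \<in> I" for x
  proof -
    have "higher_deriv n y x = FF (Yinf v) m x"
      using hdS[of m x] hdk[of m] m x by simp
    also have "\<dots> = - (\<Sum>j<n. a j x * Yinf v j x)" unfolding FF_def using m by simp
    finally have "higher_deriv n y x = - (\<Sum>j<n. a j x * Yinf v j x)" .
    moreover have "(\<Sum>i<n. a i x * higher_deriv i y x) = (\<Sum>i<n. a i x * Yinf v i x)"
      using hdk x by (intro sum.cong) auto
    ultimately show ?thesis by simp
  qed
  have init: "\<forall>k<n. higher_deriv k y x0 = v k"
    using hdk x0I Yinf_x0 by auto
  show ?thesis unfolding is_linear_ode_solution_def using nd ode init by blast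
qed

end




lemma appE_lin2: "appE p (\<lambda>k. \<alpha> * s k + \<beta> * t k) k = \<alpha> * appE p s k + \<beta> * appE p t k"
  unfolding appE_def by (simp add: sum.distrib sum_distrib_left algebra_simps)

theorem theorem2p2:
  fixes n :: nat and a :: "nat \<Rightarrow> real \<Rightarrow> real" and I :: "real set"
  assumes "n \<ge> 1"
    and "open I" and "is_interval I" and "I \<noteq> {}"
    and "\<forall>i<n. continuous_on I (a i)"
  shows "\<exists>y. is_linear_ode_solution n a I y \<and>
             lin_indep_on n (\<lambda>i. higher_deriv i y) I"
proof (rule ccontr)
  assume H: "\<not> (\<exists>y. is_linear_ode_solution n a I y \<and> lin_indep_on n (\<lambda>i. higher_deriv i y) I)"
  obtain x0 where x0: "x0 \<in> I" using assms(4) by blast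
  have ex: "\<exists>y. is_linear_ode_solution n a I y \<and> (\<forall>k<n. higher_deriv k y x0 = v k)" for v
    using existence[OF assms(1,2,3) x0 assms(5)] by blast
  have "\<forall>j. \<exists>y. is_linear_ode_solution n a I y \<and> (\<forall>k<n. higher_deriv k y x0 = (if k = j then 1 else 0))"
  proof
    fix j show "\<exists>y. is_linear_ode_solution n a I y \<and> (\<forall>k<n. higher_deriv k y x0 = (if k = j then 1 else 0))"
      using ex[of "\<lambda>k. if k = j then 1 else 0"] by simp
  qed
  then obtain Y where Y0: "\<forall>j. is_linear_ode_solution n a I (Y j) \<and>
      (\<forall>k<n. higher_deriv k (Y j) x0 = (if k = j then 1 else 0))"
    by (rule choice[THEN exE])
  have Y: "is_linear_ode_solution n a I (Y j) \<and>
      (\<forall>k<n. higher_deriv k (Y j) x0 = (if k = j then 1 else 0))" for j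
    using Y0 by blast
  have chY: "(higher_deriv k (Y j) has_real_derivative higher_deriv (Suc k) (Y j) x) (at x)"
    if "k < n" "x \<in> I" for j k x
    using Y[of j] that unfolding is_linear_ode_solution_def n_times_differentiable_on_def by blast
  have dep: "\<exists>c. (\<forall>x\<in>I. (\<Sum>i<n. c i * higher_deriv i y x) = 0) \<and> (\<exists>i<n. c i \<noteq> 0)"
    if "is_linear_ode_solution n a I y" for y
    using H that unfolding lin_indep_on_def by blast
  have rec_of: "(\<forall>k. \<forall>x\<in>I. (higher_deriv k y has_real_derivative higher_deriv (Suc k) y x) (at x)) \<and>
      (\<exists>q. q \<noteq> 0 \<and> degree q < n \<and> recP q (\<lambda>k. higher_deriv k y x0))"
    if sol: "is_linear_ode_solution n a I y" for y
  proof -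
    obtain c where rel: "\<forall>x\<in>I. (\<Sum>i<n. c i * higher_deriv i y x) = 0" and nz: "\<exists>i<n. c i \<noteq> 0"
      using dep[OF sol] by blast
    have ch: "\<forall>k<n. \<forall>x\<in>I. (higher_deriv k y has_real_derivative higher_deriv (Suc k) y x) (at x)"
      using sol unfolding is_linear_ode_solution_def n_times_differentiable_on_def by blast
    have sm: "\<forall>k. \<forall>x\<in>I. (higher_deriv k y has_real_derivative higher_deriv (Suc k) y x) (at x)"
      by (rule dep_smooth[OF assms(2) ch rel nz])
    have jets: "\<forall>x\<in>I. (\<Sum>i<n. c i * higher_deriv (i+k) y x) = 0" for k
      by (rule dep_jets[OF assms(2) sm rel])
    define q where "q = Poly (map c [0..<n])"
    have cq: "coeff q i = (if i < n then c i else 0)" for i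
      unfolding q_def by (simp add: nth_default_def)
    have q0: "q \<noteq> 0"
    proof
      assume "q = 0"
      then have "\<forall>i<n. c i = 0" using cq by (metis coeff_0)
      then show False using nz by blast
    qed
    have dq: "degree q < n"
    proof -
      have "degree q \<le> n - 1" by (rule degree_le) (use cq in auto)
      then show ?thesis using assms(1) by linarith
    qed
    have "recP q (\<lambda>k. higher_deriv k y x0)"
      unfolding recP_def
    proof
      fix k
      have "appE q (\<lambda>k. higher_deriv k y x0) k = (\<Sum>i<n. coeff q i * higher_deriv (k+i) y x0)"
        by (rule appE_bound[OF dq])
      also have "\<dots> = (\<Sum>i<n. c i * higher_deriv (i+k) y x0)"
        using cq by (intro sum.cong) (auto simp: add.commute)
      also have "\<dots> = 0" using jets x0 by blast
      finally show "appE q (\<lambda>k. higher_deriv k y x0) k = 0" .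
    qed
    then show ?thesis using sm q0 dq by blast
  qed
  have smY: "\<And>j k x. j < n \<Longrightarrow> x \<in> I \<Longrightarrow>
      (higher_deriv k (Y j) has_real_derivative higher_deriv (Suc k) (Y j) x) (at x)"
    using rec_of Y by blast
  define s where "s j k = higher_deriv k (Y j) x0" for j k
  define Yv where "Yv v = (\<lambda>z. \<Sum>j<n. v j * Y j z)" for v
  define Sv where "Sv v k = (\<Sum>j<n. v j * s j k)" for v k
  have chY': "\<And>j k x. j < n \<Longrightarrow> k < n \<Longrightarrow> x \<in> I \<Longrightarrow>
      (higher_deriv k (Y j) has_real_derivative higher_deriv (Suc k) (Y j) x) (at x)"
    using chY by blast
  have solv: "is_linear_ode_solution n a I (Yv v)" for v
  proof -
    have hdn: "higher_deriv k (Yv v) x = (\<Sum>j<n. v j * higher_deriv k (Y j) x)" if "k \<le> n" "x \<in> I" for k x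
      unfolding Yv_def by (rule hd_lincomb[OF assms(2) chY' that])
    have nd: "n_times_differentiable_on n (Yv v) I"
      unfolding n_times_differentiable_on_def
    proof (intro allI impI ballI)
      fix k x assume k: "k < n" and x: "x \<in> I"
      show "(higher_deriv k (Yv v) has_real_derivative higher_deriv (Suc k) (Yv v) x) (at x)"
        unfolding Yv_def by (rule hd_lincomb_deriv[OF assms(2) chY' k x])
    qed
    have "higher_deriv n (Yv v) x + (\<Sum>i<n. a i x * higher_deriv i (Yv v) x) = 0" if x: "x \<in> I" for x
    proof -
      have "(\<Sum>i<n. a i x * higher_deriv i (Yv v) x) = (\<Sum>i<n. a i x * (\<Sum>j<n. v j * higher_deriv i (Y j) x))"
        using hdn x by (intro sum.cong) auto
      also have "\<dots> = (\<Sum>j<n. v j * (\<Sum>i<n. a i x * higher_deriv i (Y j) x))"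
        unfolding sum_distrib_left by (subst sum.swap) (simp add: mult.left_commute)
      finally have e1: "(\<Sum>i<n. a i x * higher_deriv i (Yv v) x) = (\<Sum>j<n. v j * (\<Sum>i<n. a i x * higher_deriv i (Y j) x))" .
      have e2: "higher_deriv n (Yv v) x = (\<Sum>j<n. v j * higher_deriv n (Y j) x)" using hdn x by simp
      have "higher_deriv n (Yv v) x + (\<Sum>i<n. a i x * higher_deriv i (Yv v) x)
          = (\<Sum>j<n. v j * (higher_deriv n (Y j) x + (\<Sum>i<n. a i x * higher_deriv i (Y j) x)))"
        unfolding e1 e2 by (simp add: distrib_left sum.distrib)
      also have "\<dots> = 0"
        using Y x unfolding is_linear_ode_solution_def by simp
      finally show ?thesis .
    qed
    then show ?thesis unfolding is_linear_ode_solution_def using nd by blast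
  qed
  have jetsV: "higher_deriv k (Yv v) x0 = Sv v k" for v k
    unfolding Yv_def Sv_def s_def
    by (rule hd_lincomb[OF assms(2), of n "Suc k"]) (use smY x0 in auto)
  have "\<forall>j<n. \<exists>q. q \<noteq> 0 \<and> degree q < n \<and> recP q (s j)"
    using rec_of Y unfolding s_def by blast
  then obtain qq where qq: "\<And>j. j < n \<Longrightarrow> qq j \<noteq> 0 \<and> degree (qq j) < n \<and> recP (qq j) (s j)"
    by metis
  define P where "P = (\<Prod>j<n. qq j)"
  have P0: "P \<noteq> 0" unfolding P_def using qq by (simp add: prod_zero_iff)
  have recPj: "recP P (s j)" if "j < n" for j
  proof -
    have "P = (\<Prod>i\<in>{..<n} - {j}. qq i) * qq j"
      unfolding P_def using that by (simp add: prod.remove mult.commute)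
    then show ?thesis using recP_mult qq[OF that] by simp
  qed
  have recPv: "recP P (Sv v)" for v
    unfolding recP_def Sv_def appE_sum_seq using recPj unfolding recP_def by simp
  define Q where "Q = {g. g dvd P \<and> normalize g = g \<and> g \<noteq> 0 \<and> degree g < n}"
  have finQ: "finite Q"
    by (rule finite_subset[OF _ finite_norm_divisors[OF P0]]) (auto simp: Q_def)
  define SS where "SS = (\<lambda>g. {v. recP g (Sv v)}) ` Q"
  have "\<exists>v. \<forall>T\<in>SS. v \<notin> T"
  proof (rule no_finite_union)
    show "finite SS" unfolding SS_def using finQ by simp
    show "\<forall>T\<in>SS. \<forall>u\<in>T. \<forall>w\<in>T. \<forall>\<alpha> \<beta>. (\<lambda>i. \<alpha> * u i + \<beta> * w i) \<in> T"
    proof (intro ballI allI)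
      fix T u w \<alpha> \<beta> assume T: "T \<in> SS" and u: "u \<in> T" and w: "w \<in> T"
      from T obtain g where g: "T = {v. recP g (Sv v)}" unfolding SS_def by blast
      have eq: "Sv (\<lambda>i. \<alpha> * u i + \<beta> * w i) = (\<lambda>k. \<alpha> * Sv u k + \<beta> * Sv w k)"
        by (rule ext) (simp add: Sv_def sum.distrib sum_distrib_left algebra_simps)
      show "(\<lambda>i. \<alpha> * u i + \<beta> * w i) \<in> T"
        using u w unfolding g recP_def by (simp add: eq appE_lin2)
    qed
    show "\<forall>T\<in>SS. \<exists>u. u \<notin> T"
    proof
      fix T assume T: "T \<in> SS"
      from T obtain g where g: "T = {v. recP g (Sv v)}" and gQ: "g \<in> Q" unfolding SS_def by blast
      define m where "m = degree g"
      have mn: "m < n" and g0: "g \<noteq> 0" using gQ by (auto simp: Q_def m_def)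
      define e where "e = (\<lambda>j. if j = m then 1 else (0::real))"
      have Se: "Sv e i = s m i" for i
      proof -
        have "Sv e i = (\<Sum>j<n. if j = m then s j i else 0)"
          unfolding Sv_def e_def by (rule sum.cong) auto
        also have "\<dots> = s m i" using mn by (simp add: sum.delta)
        finally show ?thesis .
      qed
      have "appE g (Sv e) 0 = (\<Sum>i\<le>m. coeff g i * s m i)"
        unfolding appE_def m_def Se by simp
      also have "\<dots> = (\<Sum>i\<le>m. if i = m then coeff g i else 0)"
      proof (rule sum.cong)
        fix i assume "i \<in> {..m}"
        then have "i < n" using mn by simp
        then show "coeff g i * s m i = (if i = m then coeff g i else 0)"
          using Y[of m] unfolding s_def by simp
      qed simp
      also have "\<dots> = coeff g m" by simp
      finally have "appE g (Sv e) 0 \<noteq> 0" using g0 by (simp add: m_def)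
      then have "e \<notin> T" unfolding g recP_def by blast
      then show "\<exists>u. u \<notin> T" by blast
    qed
  qed
  then obtain v where v: "\<forall>T\<in>SS. v \<notin> T" by blast
  have "\<exists>q. q \<noteq> 0 \<and> degree q < n \<and> recP q (\<lambda>k. higher_deriv k (Yv v) x0)"
    using rec_of[OF solv] by (rule conjunct2)
  then obtain qv where qv: "qv \<noteq> 0" "degree qv < n" "recP qv (\<lambda>k. higher_deriv k (Yv v) x0)"
    by blast
  have qv': "recP qv (Sv v)" using qv(3) unfolding jetsV .
  define g where "g = gcd P qv"
  have rg: "recP g (Sv v)" unfolding g_def by (rule recP_gcd[OF recPv qv'])
  have gQ: "g \<in> Q"
  proof -
    have "g dvd P" unfolding g_def by simp
    moreover have "normalize g = g" unfolding g_def by simp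
    moreover have "g \<noteq> 0" unfolding g_def using P0 by simp
    moreover have "degree g \<le> degree qv"
      unfolding g_def by (rule dvd_imp_degree_le) (use qv in auto)
    ultimately show ?thesis using qv(2) unfolding Q_def by simp
  qed
  have mem: "{v. recP g (Sv v)} \<in> SS" unfolding SS_def using gQ by (rule imageI)
  have "v \<in> {v. recP g (Sv v)}" using rg by simp
  then show False using bspec[OF v mem] by simp
qed

end
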